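(* For all integers $n$ define $A(n) = \sum_{k \in \mathbb{Z}} \binom{n}{k}^2\binom{n+k}{k}^2$. Then $A(-n) = A(n-1)$ for all integers $n$. Consequently, for primes $p\ge 5$ and integers $r \ge 1$, $m \ge 1$, the congruence $A(p^r m - 1) \equiv A(p^{r-1}m - 1) \pmod{p^{3r}}$ is equivalent to $A(p^r m') \equiv A(p^{r-1} m') \pmod{p^{3r}}$ with $m'=-m$.
   Context: For all integers $n, k$, the binomial coefficient is defined by $\binom{n}{k} = \lim_{z \to 0} \frac{\Gamma(z+n+1)}{\Gamma(z+k+1)\Gamma(z+n-k+1)}$. This is a finite integer for all $n,k\in\mathbb{Z}$, agrees with the usual binomial coefficient for $n \ge 0$, and satisfies $\binom{n}{k}=\binom{n}{n-k}$. For $n\ge0$, $A(n)$ is the Apéry number $\sum_{k=0}^n\binom{n}{k}^2\binom{n+k}{k}^2$. *)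

theory Defs
  imports "HOL-Analysis.Analysis"
begin

definition binomZ :: "int \<Rightarrow> int \<Rightarrow> real" where
  "binomZ n k = Lim (at (0::real))
     (\<lambda>z. Gamma (z + of_int n + 1) / (Gamma (z + of_int k + 1) * Gamma (z + of_int n - of_int k + 1)))"

definition apery :: "int \<Rightarrow> real" where
  "apery n = (\<Sum>\<^sub>\<infinity>k::int. (binomZ n k)^2 * (binomZ (n + k) k)^2)"

end

theory Submission imports Defs begin

lemma Gamma_rG: "Gamma (x::real) = inverse (rGamma x)"
  by (simp add: rGamma_inverse_Gamma)

lemma ratio_rG: "Gamma (a::real) / (Gamma b * Gamma c) = rGamma b * rGamma c / rGamma a"
proof -
  have "inverse x / (inverse y * inverse z) = y * z / (x::real)" for x y z
    by (simp add: divide_inverse inverse_mult_distrib mult_ac)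
  from this[of "rGamma a" "rGamma b" "rGamma c"] show ?thesis by (simp only: Gamma_rG)
qed

definition Q :: "nat \<Rightarrow> real \<Rightarrow> real" where
  "Q m z = pochhammer (z - of_nat m) m * rGamma (z + 1)"

lemma rG_neg: "rGamma (z - of_nat m) = z * Q m z"
proof -
  have "rGamma (z - of_nat m) = pochhammer (z - of_nat m) (Suc m) * rGamma (z - of_nat m + of_nat (Suc m))"
    by (rule pochhammer_rGamma)
  also have "pochhammer (z - of_nat m) (Suc m) = z * pochhammer (z - of_nat m) m"
    by (simp add: pochhammer_rec')
  finally show ?thesis by (simp add: Q_def)
qed

lemma isCont_Q [continuous_intros]: "isCont (Q m) z"
  unfolding Q_def pochhammer_prod by (intro continuous_intros)

lemma Q0: "Q m 0 = (-1)^m * fact m"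
  unfolding Q_def by (simp add: pochhammer_minus pochhammer_fact)

lemma Q0_nz: "Q m 0 \<noteq> 0" by (simp add: Q0)

lemma rG_nat: "rGamma (of_nat k + 1 :: real) = inverse (fact k)"
  using Gamma_fact[of k] by (simp add: rGamma_inverse_Gamma add.commute)

lemma Lim_at0:
  assumes "isCont g 0" "\<And>z. z \<noteq> 0 \<Longrightarrow> f z = g z"
  shows "Lim (at (0::real)) f = g 0"
proof (rule tendsto_Lim)
  show "\<not> trivial_limit (at (0::real))" by simp
  have ev: "eventually (\<lambda>z. g z = f z) (at (0::real))"
    using assms(2) by (simp add: eventually_at_filter)
  show "(f \<longlongrightarrow> g 0) (at 0)"
    using assms(1) tendsto_cong[OF ev] by (simp add: isCont_def)
qed

lemma binomZ_rG: "binomZ n k = Lim (at (0::real))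
   (\<lambda>z. rGamma (z + of_int k + 1) * rGamma (z + of_int n - of_int k + 1) / rGamma (z + of_int n + 1))"
  unfolding binomZ_def ratio_rG ..

lemma rG_int_nonpos: "k \<le> 0 \<Longrightarrow> rGamma (of_int k :: real) = 0"
  by (simp add: rGamma_of_int)

lemma L1:
  assumes "n \<ge> 0"
  shows "binomZ n k = (if 0 \<le> k \<and> k \<le> n then of_nat (nat n choose nat k) else 0)"
proof -
  obtain a where a: "n = int a" using assms nonneg_eq_int by blast
  have e: "(0::real) + of_int n + 1 = of_nat a + 1" using a by simp
  have nz: "rGamma (0 + of_int n + 1 :: real) \<noteq> 0"
    unfolding e rG_nat by simp
  have "binomZ n k = rGamma (0 + of_int k + 1) * rGamma (0 + of_int n - of_int k + 1) / rGamma (0 + of_int n + 1)"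
    unfolding binomZ_rG
    by (rule Lim_at0[where g = "\<lambda>z. rGamma (z + of_int k + 1) * rGamma (z + of_int n - of_int k + 1) / rGamma (z + of_int n + 1)"])
       (use nz in \<open>auto intro!: continuous_intros\<close>)
  also have "\<dots> = rGamma (of_int (k+1)) * rGamma (of_int (n-k+1)) / rGamma (of_nat a + 1)"
    using e by simp
  also have "\<dots> = (if 0 \<le> k \<and> k \<le> n then of_nat (nat n choose nat k) else 0)"
  proof (cases "0 \<le> k \<and> k \<le> n")
    case True
    then obtain b where b: "k = int b" using nonneg_eq_int by blast
    have ba: "b \<le> a" using True a b by simp
    have 1: "rGamma (of_int (k+1)) = (inverse (fact b) :: real)"
      using b rG_nat[of b] by simp
    have 2: "rGamma (of_int (n-k+1)) = (inverse (fact (a-b)) :: real)"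
      using a b ba rG_nat[of "a-b"] by (simp add: of_nat_diff)
    have 3: "(of_nat (nat n choose nat k) :: real) = fact a / (fact b * fact (a-b))"
      using a b ba by (simp add: binomial_fact)
    show ?thesis unfolding 1 2 3 rG_nat using True by (simp add: divide_inverse mult_ac)
  next
    case False
    show ?thesis
    proof (cases "k < 0")
      case True
      have z: "rGamma (of_int (k+1)) = (0::real)" by (rule rG_int_nonpos) (use True in simp)
      show ?thesis unfolding z using False by simp
    next
      case False2: False
      have z: "rGamma (of_int (n-k+1)) = (0::real)" by (rule rG_int_nonpos) (use False False2 in simp)
      show ?thesis unfolding z using False by simp
    qed
  qed
  finally show ?thesis .
qed

lemma L2:
  assumes "n = - int M - 1" "k = int K"
  shows "(binomZ n k)^2 = (of_nat (M + K choose K))^2"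
proof -
  let ?g = "\<lambda>z::real. rGamma (z + of_nat K + 1) * Q (M+K) z / Q M z"
  have e1: "z + of_int n + 1 = z - of_nat M" for z :: real using assms by simp
  have e2: "rGamma (z + of_int n - of_int k + 1) = z * Q (M+K) z" for z :: real
  proof -
    have "z + of_int n - of_int k + 1 = z - of_nat (M+K)" using assms by simp
    then show ?thesis by (simp only: rG_neg)
  qed
  have e3: "z + of_int k + 1 = z + of_nat K + 1" for z :: real using assms by simp
  have "binomZ n k = ?g 0"
    unfolding binomZ_rG e1 e2 e3
    by (rule Lim_at0) (auto intro!: continuous_intros simp: Q0_nz rG_neg)
  also have "\<dots> = inverse (fact K) * Q (M+K) 0 / Q M 0" using rG_nat[of K] by simp
  finally have h: "binomZ n k = inverse (fact K) * Q (M+K) 0 / Q M 0" .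
  have "binomZ n k = (-1)^K * (fact (M+K) / (fact K * fact M))"
    unfolding h by (simp add: Q0 power_add field_simps)
  then have "(binomZ n k)^2 = ((-1)^K)^2 * (fact (M+K) / (fact K * fact M))^2"
    by (simp only: power_mult_distrib)
  moreover have "((-1::real)^K)^2 = 1" by (simp flip: power_mult)
  ultimately have "(binomZ n k)^2 = (fact (M+K) / (fact K * fact M))^2"
    by simp
  also have "fact (M+K) / (fact K * fact M) = (of_nat (M + K choose K) :: real)"
    by (simp add: binomial_fact)
  finally show ?thesis .
qed

lemma L3:
  assumes "n = - int M - 1" "k = - int J - 1" "J < M"
  shows "binomZ n k = 0"
proof -
  let ?g = "\<lambda>z::real. z * Q J z * Q (M-J-1) z / Q M z"
  have e1: "z + of_int n + 1 = z - of_nat M" for z :: real using assms by simp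
  have e2: "rGamma (z + of_int n - of_int k + 1) = z * Q (M-J-1) z" for z :: real
  proof -
    have "z + of_int n - of_int k + 1 = z - of_nat (M-J-1)" using assms by (simp add: of_nat_diff)
    then show ?thesis by (simp only: rG_neg)
  qed
  have e3: "z + of_int k + 1 = z - of_nat J" for z :: real using assms by simp
  have "binomZ n k = ?g 0"
    unfolding binomZ_rG e1 e2 e3
    by (rule Lim_at0) (auto intro!: continuous_intros simp: Q0_nz rG_neg)
  then show ?thesis by simp
qed

lemma term_eq:
  fixes N k :: int
  assumes "N \<ge> 1"
  shows "(binomZ (-N) k)^2 * (binomZ (-N+k) k)^2 = (binomZ (N-1) k)^2 * (binomZ (N-1+k) k)^2"
proof (cases "k < 0")
  case True
  have r: "binomZ (N-1) k = 0" using True assms by (simp add: L1)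
  show ?thesis
  proof (cases "k > -N")
    case True
    have "binomZ (-N) k = 0"
      by (rule L3[where M="nat (N-1)" and J="nat (-k-1)"]) (use True \<open>k<0\<close> assms in auto)
    then show ?thesis using r by simp
  next
    case False
    have "binomZ (-N+k) k = 0"
      by (rule L3[where M="nat (N-k-1)" and J="nat (-k-1)"]) (use False \<open>k<0\<close> assms in auto)
    then show ?thesis using r by simp
  qed
next
  case False
  show ?thesis
  proof (cases "k \<ge> N")
    case True
    have "binomZ (N-1) k = 0" using True assms by (simp add: L1)
    moreover have "binomZ (-N+k) k = 0" using True assms by (simp add: L1)
    ultimately show ?thesis by simp
  next
    case False2: False
    define a where "a = nat (N-1)"
    define b where "b = nat k"
    have ab: "N = int a + 1" "k = int b" "b \<le> a"
      using assms False False2 unfolding a_def b_def by auto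
    have 1: "(binomZ (-N) k)^2 = (of_nat (a + b choose b))^2"
      by (rule L2[where M=a and K=b]) (use ab in auto)
    have 2: "(binomZ (-N+k) k)^2 = (of_nat ((a - b) + b choose b))^2"
      by (rule L2[where M="a-b" and K=b]) (use ab in auto)
    have 3: "binomZ (N-1) k = of_nat (a choose b)"
      using ab by (simp add: L1)
    have 4: "binomZ (N-1+k) k = of_nat (a + b choose b)"
      using ab by (simp add: L1 nat_add_distrib)
    show ?thesis unfolding 1 2 3 4 using ab by simp
  qed
qed

lemma apery_sym1: assumes "N \<ge> 1" shows "apery (-N) = apery (N-1)"
  unfolding apery_def by (rule infsum_cong) (rule term_eq[OF assms])

lemma apery_sym: "apery (-n) = apery (n-1)"
proof (cases "n \<ge> 1")
  case True then show ?thesis by (rule apery_sym1)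
next
  case False
  then have "apery (-(1-n)) = apery ((1-n)-1)" by (intro apery_sym1) simp
  then show ?thesis by simp
qed

theorem mainTheorem4:
  shows "(\<forall>n::int. apery (- n) = apery (n - 1)) \<and>
    (\<forall>(p::int) (r::nat) (m::int). prime p \<and> p \<ge> 5 \<and> r \<ge> 1 \<and> m \<ge> 1 \<longrightarrow>
       ((\<exists>t::int. apery (p ^ r * m - 1) - apery (p ^ (r - 1) * m - 1) = of_int (p ^ (3 * r)) * of_int t)
        \<longleftrightarrow>
        (let m' = - m in
         \<exists>t::int. apery (p ^ r * m') - apery (p ^ (r - 1) * m') = of_int (p ^ (3 * r)) * of_int t)))"
proof (intro conjI allI impI)
  fix n :: int show "apery (- n) = apery (n - 1)" by (rule apery_sym)
next
  fix p m :: int and r :: nat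
  have a: "apery (p ^ r * m - 1) = apery (p ^ r * (- m))"
    using apery_sym[of "p ^ r * m"] by simp
  have b: "apery (p ^ (r-1) * m - 1) = apery (p ^ (r-1) * (- m))"
    using apery_sym[of "p ^ (r-1) * m"] by simp
  show "(\<exists>t::int. apery (p ^ r * m - 1) - apery (p ^ (r - 1) * m - 1) = of_int (p ^ (3 * r)) * of_int t)
        \<longleftrightarrow>
        (let m' = - m in
         \<exists>t::int. apery (p ^ r * m') - apery (p ^ (r - 1) * m') = of_int (p ^ (3 * r)) * of_int t)"
    unfolding a b Let_def ..
qed

end
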